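(* Let $\mathcal{M}=\langle S,\to,L\rangle$ be a labeled transition system and let $B\subseteq S\times S$ be a skipping simulation (SKS) on $\mathcal{M}$. Then $B$ is a reduced well-founded skipping relation (RWFSK) on $\mathcal{M}$.
   Context: A labeled transition system is $\mathcal{M}=\langle S,\to,L\rangle$ where $S$ is a non-empty (possibly infinite, of arbitrary cardinality) set of states, $\to\subseteq S\times S$ is left-total (every state has a successor), and $L$ is a function with domain $S$. A fullpath is an infinite sequence $\sigma$ of states with $\sigma(i)\to\sigma(i+1)$ for all $i\in\omega$; "$\sigma$ is a fullpath starting at $s$" means additionally $\sigma(0)=s$. $w\to^{+}v$ means there is a finite path $w=v_0\to\cdots\to v_k=v$ with $k\ge1$. Matching: let $\mathit{INC}$ be the set of strictly increasing infinite sequences of natural numbers starting at $0$. For a fullpath $\sigma$ and $\pi\in\mathit{INC}$, the $i$-th segment of $\sigma$ w.r.t. $\pi$ is the finite sequence $\sigma(\pi(i)),\dots,\sigma(\pi(i+1)-1)$. For a relation $B$, fullpaths $\sigma,\delta$ and $\pi,\xi\in\mathit{INC}$, $\mathit{corr}(B,\sigma,\pi,\delta,\xi)$ holds iff for every $i\in\omega$ and every state $s$ in the $i$-th segment of $\sigma$ w.r.t. $\pi$, $sB\delta(\xi(i))$. $\mathit{match}(B,\sigma,\delta)$ holds iff there exist $\pi,\xi\in\mathit{INC}$ with $\mathit{corr}(B,\sigma,\pi,\delta,\xi)$. $B\subseteq S\times S$ is a skipping simulation (SKS) on $\mathcal{M}$ iff for all $s,w$ with $sBw$: (SKS1) $L(s)=L(w)$,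 and (SKS2) for every fullpath $\sigma$ starting at $s$ there is a fullpath $\delta$ starting at $w$ with $\mathit{match}(B,\sigma,\delta)$. $B$ is an RWFSK on $\mathcal{M}$ iff (RWFSK1) for all $s,w$ with $sBw$, $L(s)=L(w)$; and (RWFSK2) there exist a well-founded set $\langle W,\prec\rangle$ and a function $\mathit{rankt}:S\times S\to W$ such that for all $s,u,w\in S$ with $s\to u$ and $sBw$, either (a) $uBw$ and $\mathit{rankt}(u,w)\prec\mathit{rankt}(s,w)$, or (b) there is $v$ with $w\to^{+}v$ and $uBv$. *)

theory Defs
  imports Main
begin

definition lts :: "('a \<Rightarrow> 'a \<Rightarrow> bool) \<Rightarrow> ('a \<Rightarrow> 'l) \<Rightarrow> bool" where
  "lts R L \<longleftrightarrow> (\<forall>s. \<exists>u. R s u)"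

definition fullpath :: "('a \<Rightarrow> 'a \<Rightarrow> bool) \<Rightarrow> (nat \<Rightarrow> 'a) \<Rightarrow> bool" where
  "fullpath R \<sigma> \<longleftrightarrow> (\<forall>i. R (\<sigma> i) (\<sigma> (Suc i)))"

definition INC :: "(nat \<Rightarrow> nat) set" where
  "INC = {\<pi>. strict_mono \<pi> \<and> \<pi> 0 = 0}"

definition corr :: "('a \<Rightarrow> 'a \<Rightarrow> bool) \<Rightarrow> (nat \<Rightarrow> 'a) \<Rightarrow> (nat \<Rightarrow> nat)
    \<Rightarrow> (nat \<Rightarrow> 'a) \<Rightarrow> (nat \<Rightarrow> nat) \<Rightarrow> bool" where
  "corr B \<sigma> \<pi> \<delta> \<xi> \<longleftrightarrow>
     (\<forall>i k. \<pi> i \<le> k \<and> k < \<pi> (Suc i) \<longrightarrow> B (\<sigma> k) (\<delta> (\<xi> i)))"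

definition match :: "('a \<Rightarrow> 'a \<Rightarrow> bool) \<Rightarrow> (nat \<Rightarrow> 'a) \<Rightarrow> (nat \<Rightarrow> 'a) \<Rightarrow> bool" where
  "match B \<sigma> \<delta> \<longleftrightarrow> (\<exists>\<pi>\<in>INC. \<exists>\<xi>\<in>INC. corr B \<sigma> \<pi> \<delta> \<xi>)"

definition SKS :: "('a \<Rightarrow> 'a \<Rightarrow> bool) \<Rightarrow> ('a \<Rightarrow> 'l) \<Rightarrow> ('a \<Rightarrow> 'a \<Rightarrow> bool) \<Rightarrow> bool" where
  "SKS R L B \<longleftrightarrow> (\<forall>s w. B s w \<longrightarrow>
     L s = L w \<and>
     (\<forall>\<sigma>. fullpath R \<sigma> \<and> \<sigma> 0 = s \<longrightarrow>
        (\<exists>\<delta>. fullpath R \<delta> \<and> \<delta> 0 = w \<and> match B \<sigma> \<delta>)))"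

definition rwfsk_rank :: "('a \<Rightarrow> 'a \<Rightarrow> bool) \<Rightarrow> ('a \<Rightarrow> 'a \<Rightarrow> bool)
    \<Rightarrow> ('w \<times> 'w) set \<Rightarrow> ('a \<Rightarrow> 'a \<Rightarrow> 'w) \<Rightarrow> bool" where
  "rwfsk_rank R B W rankt \<longleftrightarrow> wf W \<and>
     (\<forall>s u w. R s u \<and> B s w \<longrightarrow>
        (B u w \<and> (rankt u w, rankt s w) \<in> W) \<or> (\<exists>v. R\<^sup>+\<^sup>+ w v \<and> B u v))"

text \<open>RWFSK. The well-founded set is taken inside the type 'a \<times> 'a; this is no
  loss of generality: the image of any rank function S \<times> S \<rightarrow> W injects into S \<times> S.\<close>
definition RWFSK :: "('a \<Rightarrow> 'a \<Rightarrow> bool) \<Rightarrow> ('a \<Rightarrow> 'l) \<Rightarrow> ('a \<Rightarrow> 'a \<Rightarrow> bool) \<Rightarrow> bool" where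
  "RWFSK R L B \<longleftrightarrow> (\<forall>s w. B s w \<longrightarrow> L s = L w) \<and>
     (\<exists>(W :: (('a \<times> 'a) \<times> ('a \<times> 'a)) set) rankt. rwfsk_rank R B W rankt)"

end

theory Submission
  imports Defs
begin

lemma path_tranclp:
  assumes "fullpath R d" shows "R\<^sup>+\<^sup>+ (d 0) (d (Suc k))"
proof (induction k)
  case 0 then show ?case using assms unfolding fullpath_def by auto
next
  case (Suc k) then show ?case using assms unfolding fullpath_def
    by (meson tranclp.trancl_into_trancl)
qed

lemma seg1:
  assumes "fullpath R \<sigma>" "fullpath R \<delta>" "match B \<sigma> \<delta>"
  shows "\<exists>k\<ge>1. \<exists>j\<ge>1. B (\<sigma> k) (\<delta> j) \<and> (k = 1 \<or> B (\<sigma> 1) (\<delta> 0))"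
proof -
  obtain \<pi> \<xi> where p: "strict_mono \<pi>" "\<pi> 0 = 0" and x: "strict_mono \<xi>" "\<xi> 0 = 0"
    and c: "corr B \<sigma> \<pi> \<delta> \<xi>"
    using assms(3) unfolding match_def INC_def by auto
  have c': "\<And>i k. \<pi> i \<le> k \<Longrightarrow> k < \<pi> (Suc i) \<Longrightarrow> B (\<sigma> k) (\<delta> (\<xi> i))"
    using c unfolding corr_def by blast
  have "\<pi> 0 < \<pi> 1" using p(1) by (simp add: strict_mono_less)
  then have p1: "\<pi> 1 \<ge> 1" using p(2) by simp
  have "\<xi> 0 < \<xi> 1" using x(1) by (simp add: strict_mono_less)
  then have x1: "\<xi> 1 \<ge> 1" using x(2) by simp
  have p2: "\<pi> 1 < \<pi> (Suc 1)" using p(1) by (simp add: strict_mono_less)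
  have b1: "B (\<sigma> (\<pi> 1)) (\<delta> (\<xi> 1))" using c'[of 1 "\<pi> 1"] p2 by simp
  show ?thesis
  proof (cases "\<pi> 1 = 1")
    case True then show ?thesis using b1 x1 by auto
  next
    case False
    then have "1 < \<pi> (Suc 0)" using p1 by simp
    then have "B (\<sigma> 1) (\<delta> (\<xi> 0))" using c'[of 0 1] p(2) by simp
    then have "B (\<sigma> 1) (\<delta> 0)" using x(2) by simp
    then show ?thesis using b1 x1 p1 by blast
  qed
qed

theorem theorem3:
  fixes R :: "'a \<Rightarrow> 'a \<Rightarrow> bool" and L :: "'a \<Rightarrow> 'l" and B :: "'a \<Rightarrow> 'a \<Rightarrow> bool"
  assumes "lts R L"
    and "SKS R L B"
  shows "RWFSK R L B"
proof -
  define bad where "bad = (\<lambda>w u. \<not> (\<exists>v. R\<^sup>+\<^sup>+ w v \<and> B u v))"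
  define W :: "(('a \<times> 'a) \<times> ('a \<times> 'a)) set" where
    "W = {((u,w),(s,w')). w = w' \<and> R s u \<and> B s w \<and> B u w \<and> bad w u}"
  have lab: "\<forall>s w. B s w \<longrightarrow> L s = L w" using assms(2) unfolding SKS_def by auto
  have sks: "\<And>s w \<sigma>. B s w \<Longrightarrow> fullpath R \<sigma> \<Longrightarrow> \<sigma> 0 = s \<Longrightarrow>
      \<exists>\<delta>. fullpath R \<delta> \<and> \<delta> 0 = w \<and> match B \<sigma> \<delta>"
    using assms(2) unfolding SKS_def by blast
  define g where "g = (\<lambda>x. SOME y. R x y)"
  have g: "\<And>x. R x (g x)" unfolding g_def using assms(1) unfolding lts_def by (metis someI_ex)
  have wfW: "wf W"
  proof (rule ccontr)
    assume "\<not> wf W"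
    then obtain f where f: "\<And>i. (f (Suc i), f i) \<in> W"
      unfolding wf_iff_no_infinite_down_chain by blast
    define \<sigma> where "\<sigma> = (\<lambda>i. fst (f i))"
    define w where "w = snd (f 0)"
    have sndc: "snd (f i) = w" for i
    proof (induction i)
      case (Suc i)
      have "(f (Suc i), f i) \<in> W" by (rule f)
      then have "snd (f (Suc i)) = snd (f i)" unfolding W_def by (auto split: prod.splits)
      then show ?case using Suc by simp
    qed (simp add: w_def)
    have step: "R (\<sigma> i) (\<sigma> (Suc i)) \<and> B (\<sigma> i) w \<and> bad w (\<sigma> (Suc i))" for i
      using f[of i] sndc[of i] sndc[of "Suc i"]
      by (auto simp: W_def \<sigma>_def split: prod.splits)
    have fp: "fullpath R \<sigma>" using step unfolding fullpath_def by blast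
    obtain \<delta> where d: "fullpath R \<delta>" "\<delta> 0 = w" "match B \<sigma> \<delta>"
      using sks[OF _ fp refl] step[of 0] by blast
    obtain k j where "k \<ge> 1" "j \<ge> 1" "B (\<sigma> k) (\<delta> j)" using seg1[OF fp d(1) d(3)] by blast
    moreover have "R\<^sup>+\<^sup>+ w (\<delta> j)" using path_tranclp[OF d(1), of "j - 1"] d(2) \<open>j \<ge> 1\<close> by simp
    moreover have "bad w (\<sigma> k)" using step[of "k - 1"] \<open>k \<ge> 1\<close> by simp
    ultimately show False unfolding bad_def by blast
  qed
  have main: "(B u w \<and> ((u, w), (s, w)) \<in> W) \<or> (\<exists>v. R\<^sup>+\<^sup>+ w v \<and> B u v)"
    if su: "R s u" and sw: "B s w" for s u w
  proof (cases "bad w u")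
    case False then show ?thesis unfolding bad_def by blast
  next
    case True
    define \<sigma> where "\<sigma> = (\<lambda>n. case n of 0 \<Rightarrow> s | Suc m \<Rightarrow> (g ^^ m) u)"
    have fp: "fullpath R \<sigma>" unfolding fullpath_def
    proof
      fix i show "R (\<sigma> i) (\<sigma> (Suc i))"
        by (cases i) (auto simp: \<sigma>_def su g)
    qed
    obtain \<delta> where d: "fullpath R \<delta>" "\<delta> 0 = w" "match B \<sigma> \<delta>"
      using sks[OF sw fp] by (auto simp: \<sigma>_def)
    obtain k j where kj: "k \<ge> 1" "j \<ge> 1" "B (\<sigma> k) (\<delta> j)" "k = 1 \<or> B (\<sigma> 1) (\<delta> 0)"
      using seg1[OF fp d(1) d(3)] by blast
    have tr: "R\<^sup>+\<^sup>+ w (\<delta> j)" using path_tranclp[OF d(1), of "j - 1"] d(2) kj(2) by simp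
    have s1: "\<sigma> 1 = u" by (simp add: \<sigma>_def)
    have "k \<noteq> 1" using True kj tr s1 unfolding bad_def by blast
    then have "B u w" using kj s1 d(2) by simp
    then show ?thesis using True su sw unfolding W_def by auto
  qed
  have "rwfsk_rank R B W (\<lambda>u w. (u, w))"
    unfolding rwfsk_rank_def using wfW main by blast
  then show ?thesis unfolding RWFSK_def using lab by blast
qed

end
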